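(* Let $\delta_0=\frac14-\frac{2}{\pi^2}$. For every $\epsilon>0$ there exists a set $A\subseteq\mathbb{N}$ having (natural) density greater than $\delta_0-\epsilon$ such that: $A+A$ contains no squarefree integer; $A+A+A$ contains all positive integers with finitely many exceptions; and the set of positive integers which are not squarefree and are not contained in $A+A$ has upper density at most $\epsilon$.
   Context: $A+A=\{a+b:a,b\in A\}$, $A+A+A=\{a+b+c:a,b,c\in A\}$. *)

theory Defs
  imports Complex_Main "HOL-Computational_Algebra.Squarefree" "HOL-Library.Extended_Real"
begin

definition sumset2 :: "nat set \<Rightarrow> nat set" where
  "sumset2 A = {a + b | a b. a \<in> A \<and> b \<in> A}"

definition sumset3 :: "nat set \<Rightarrow> nat set" where
  "sumset3 A = {a + b + c | a b c. a \<in> A \<and> b \<in> A \<and> c \<in> A}"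

definition count_ratio :: "nat set \<Rightarrow> nat \<Rightarrow> real" where
  "count_ratio A n = real (card (A \<inter> {1..n})) / real n"

definition has_density :: "nat set \<Rightarrow> real \<Rightarrow> bool" where
  "has_density A d \<longleftrightarrow> (count_ratio A \<longlongrightarrow> d) sequentially"

definition upper_density :: "nat set \<Rightarrow> ereal" where
  "upper_density A = limsup (\<lambda>n. ereal (count_ratio A n))"

end

theory Submission
  imports Defs "HOL-Analysis.Analysis"
begin


lemma periodic_count_step:
  fixes A :: "nat set"
  assumes per: "\<And>n. n \<ge> 1 \<Longrightarrow> (n + T \<in> A \<longleftrightarrow> n \<in> A)"
  shows "card (A \<inter> {1..n+T}) = card (A \<inter> {1..n}) + card (A \<inter> {1..T})"
proof -
  have split: "A \<inter> {1..n+T} = (A \<inter> {1..T}) \<union> ((\<lambda>x. x + T) ` (A \<inter> {1..n}))"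
  proof (rule set_eqI, rule iffI)
    fix x assume x: "x \<in> A \<inter> {1..n+T}"
    show "x \<in> (A \<inter> {1..T}) \<union> ((\<lambda>x. x + T) ` (A \<inter> {1..n}))"
    proof (cases "x \<le> T")
      case True thus ?thesis using x by auto
    next
      case False
      then have "x - T \<ge> 1" "x = (x - T) + T" by auto
      moreover have "x - T \<in> A" using per[of "x - T"] x \<open>x - T \<ge> 1\<close> \<open>x = (x - T) + T\<close> by auto
      ultimately show ?thesis using x by (auto intro!: image_eqI[of x _ "x - T"])
    qed
  next
    fix x assume "x \<in> (A \<inter> {1..T}) \<union> ((\<lambda>x. x + T) ` (A \<inter> {1..n}))"
    then show "x \<in> A \<inter> {1..n+T}" using per by auto
  qed
  have disj: "(A \<inter> {1..T}) \<inter> ((\<lambda>x. x + T) ` (A \<inter> {1..n})) = {}" by auto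
  have "card (A \<inter> {1..n+T}) = card (A \<inter> {1..T}) + card ((\<lambda>x. x + T) ` (A \<inter> {1..n}))"
    unfolding split by (rule card_Un_disjoint) (use disj in auto)
  also have "card ((\<lambda>x. x + T) ` (A \<inter> {1..n})) = card (A \<inter> {1..n})"
    by (rule card_image) (auto simp: inj_on_def)
  finally show ?thesis by simp
qed

lemma periodic_density:
  fixes A :: "nat set" and T :: nat
  assumes T: "T > 0" and per: "\<And>n. n \<ge> 1 \<Longrightarrow> (n + T \<in> A \<longleftrightarrow> n \<in> A)"
  shows "has_density A (real (card (A \<inter> {1..T})) / real T)"
proof -
  define f where "f n = card (A \<inter> {1..n})" for n
  define c where "c = f T"
  have step: "f (n + T) = f n + c" for n
    unfolding f_def c_def by (rule periodic_count_step[OF per])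
  have bound: "\<bar>real T * real (f n) - real c * real n\<bar> \<le> real c * real T" for n
  proof (induction n rule: less_induct)
    case (less n)
    show ?case
    proof (cases "n < T")
      case True
      have "f n \<le> c" unfolding f_def c_def by (rule card_mono) (use True in auto)
      then have a: "real T * real (f n) \<le> real c * real T" by (simp add: mult.commute mult_left_mono)
      have b: "real c * real n \<le> real c * real T" using True by (simp add: mult_left_mono)
      have "0 \<le> real T * real (f n)" "0 \<le> real c * real n" by auto
      with a b show ?thesis by linarith
    next
      case False
      then have n: "n = (n - T) + T" by simp
      have IH: "\<bar>real T * real (f (n - T)) - real c * real (n - T)\<bar> \<le> real c * real T"
        using less.IH[of "n - T"] T False by auto
      have "f n = f (n - T) + c" using step[of "n - T"] n by simp
      moreover have "real (n - T) = real n - real T" using False by simp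
      ultimately show ?thesis using IH by (simp add: algebra_simps)
    qed
  qed
  have lim0: "(\<lambda>n. f n / real n - c / real T) \<longlonglongrightarrow> 0"
  proof (rule Lim_null_comparison)
    show "\<forall>\<^sub>F n in sequentially. norm (f n / real n - c / real T) \<le> real c * (1 / real n)"
      using eventually_gt_at_top[of 0]
    proof eventually_elim
      case (elim n)
      have "f n / real n - c / real T = (real T * real (f n) - real c * real n) / (real T * real n)"
        using elim T by (simp add: field_simps)
      then have "norm (f n / real n - c / real T) = \<bar>real T * real (f n) - real c * real n\<bar> / (real T * real n)"
        using elim T by simp
      also have "\<dots> \<le> (real c * real T) / (real T * real n)"
        using bound[of n] elim T by (intro divide_right_mono) auto
      also have "\<dots> = real c * (1 / real n)" using T by simp
      finally show ?case .
    qed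
    show "(\<lambda>n. real c * (1 / real n)) \<longlonglongrightarrow> 0"
      using tendsto_mult_right_zero[OF lim_inverse_n'] by simp
  qed
  have "(\<lambda>n. (f n / real n - c / real T) + c / real T) \<longlonglongrightarrow> 0 + c / real T"
    by (intro tendsto_add lim0 tendsto_const)
  then have "(\<lambda>n. f n / real n) \<longlonglongrightarrow> c / real T" by simp
  then show ?thesis unfolding has_density_def count_ratio_def f_def c_def
    by (simp add: f_def)
qed



lemma per_mult:
  fixes n m k :: nat
  assumes per: "\<And>n. S (n + m) = S n"
  shows "S (n + m * k) = S n"
proof (induction k)
  case (Suc k)
  have "S (n + m * Suc k) = S ((n + m * k) + m)" by (simp add: algebra_simps)
  also have "\<dots> = S (n + m * k)" by (rule per)
  finally show ?case using Suc by simp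
qed simp

lemma per_mod:
  fixes n m :: nat
  assumes per: "\<And>n. S (n + m) = S n"
  shows "S n = S (n mod m)"
  using per_mult[of S m "n mod m" "n div m", OF per] by (metis mod_mult_div_eq)

lemma count_periodic:
  fixes S :: "nat \<Rightarrow> bool" and m k :: nat
  assumes per: "\<And>n. S (n + m) = S n"
  shows "card {n. n < m * k \<and> S n} = k * card {n. n < m \<and> S n}"
proof (induction k)
  case 0 then show ?case by simp
next
  case (Suc k)
  have eq: "{n. n < m * Suc k \<and> S n} = {n. n < m * k \<and> S n} \<union> (\<lambda>x. x + m * k) ` {n. n < m \<and> S n}"
  proof (rule set_eqI, rule iffI)
    fix x assume x: "x \<in> {n. n < m * Suc k \<and> S n}"
    show "x \<in> {n. n < m * k \<and> S n} \<union> (\<lambda>x. x + m * k) ` {n. n < m \<and> S n}"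
    proof (cases "x < m * k")
      case True then show ?thesis using x by auto
    next
      case False
      then have "x = (x - m*k) + m * k" "x - m*k < m" using x by auto
      moreover have "S (x - m*k)" using per_mult[of S m "x - m*k" k, OF per] x \<open>x = (x - m*k) + m * k\<close> by simp
      ultimately show ?thesis by (auto intro!: image_eqI[of x _ "x - m*k"])
    qed
  next
    fix x assume "x \<in> {n. n < m * k \<and> S n} \<union> (\<lambda>x. x + m * k) ` {n. n < m \<and> S n}"
    then show "x \<in> {n. n < m * Suc k \<and> S n}" using per_mult[of S m _ k, OF per] by auto
  qed
  have "card {n. n < m * Suc k \<and> S n} = card {n. n < m * k \<and> S n} + card ((\<lambda>x. x + m * k) ` {n. n < m \<and> S n})"
    unfolding eq by (rule card_Un_disjoint) auto
  also have "card ((\<lambda>x. x + m * k) ` {n. n < m \<and> S n}) = card {n. n < m \<and> S n}"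
    by (rule card_image) (auto simp: inj_on_def)
  finally show ?case using Suc by simp
qed

lemma count_multiples:
  fixes S :: "nat \<Rightarrow> bool" and m k :: nat
  assumes per: "\<And>n. S (n + m) = S n" and cop: "coprime m k" and k: "k > 0" and m: "m > 0"
  shows "card {n. n < m * k \<and> S n \<and> k dvd n} = card {n. n < m \<and> S n}"
proof -
  have e1: "{n. n < m * k \<and> S n \<and> k dvd n} = (\<lambda>j. k * j) ` {j. j < m \<and> S (k * j)}"
  proof (rule set_eqI, rule iffI)
    fix x assume x: "x \<in> {n. n < m * k \<and> S n \<and> k dvd n}"
    then obtain j where j: "x = k * j" by auto
    have "k * j < k * m" using x j by (simp add: mult.commute)
    then have "j < m" by simp
    then show "x \<in> (\<lambda>j. k * j) ` {j. j < m \<and> S (k * j)}" using x j by auto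
  next
    fix x assume "x \<in> (\<lambda>j. k * j) ` {j. j < m \<and> S (k * j)}"
    then obtain j where "x = k * j" "j < m" "S (k*j)" by auto
    then show "x \<in> {n. n < m * k \<and> S n \<and> k dvd n}" using k by (auto simp: mult.commute)
  qed
  have c1: "card {n. n < m * k \<and> S n \<and> k dvd n} = card {j. j < m \<and> S (k * j)}"
    unfolding e1 by (rule card_image) (use k in \<open>auto simp: inj_on_def\<close>)
  define g where "g j = (k * j) mod m" for j
  have inj: "inj_on g {..<m}"
  proof (rule inj_onI)
    fix a b assume a: "a \<in> {..<m}" and b: "b \<in> {..<m}" and "g a = g b"
    then have "int (k * a mod m) = int (k * b mod m)" unfolding g_def by simp
    then have "int k * int a mod int m = int k * int b mod int m" by (simp add: of_nat_mod)
    moreover have "coprime (int m) (int k)" using cop by simp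
    ultimately have "int a mod int m = int b mod int m" using mult_mod_cancel_left by blast
    then show "a = b" using a b by simp
  qed
  have surj: "g ` {..<m} = {..<m}"
    by (rule endo_inj_surj) (use inj m in \<open>auto simp: g_def\<close>)
  have e2: "g ` {j. j < m \<and> S (k * j)} = {n. n < m \<and> S n}"
  proof (rule set_eqI, rule iffI)
    fix x assume "x \<in> g ` {j. j < m \<and> S (k * j)}"
    then obtain j where "x = g j" "S (k*j)" by auto
    then show "x \<in> {n. n < m \<and> S n}" using per_mod[of S m "k*j", OF per] m by (auto simp: g_def)
  next
    fix x assume x: "x \<in> {n. n < m \<and> S n}"
    then have "x \<in> g ` {..<m}" using surj by auto
    then obtain j where j: "j < m" "x = g j" by auto
    then have "S (k * j)" using per_mod[of S m "k*j", OF per] x by (auto simp: g_def)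
    then show "x \<in> g ` {j. j < m \<and> S (k * j)}" using j by auto
  qed
  have "card {n. n < m \<and> S n} = card {j. j < m \<and> S (k * j)}"
    unfolding e2[symmetric] by (rule card_image) (rule inj_on_subset[OF inj], auto)
  then show ?thesis using c1 by simp
qed

lemma count_nonmultiples:
  fixes S :: "nat \<Rightarrow> bool" and m k :: nat
  assumes per: "\<And>n. S (n + m) = S n" and cop: "coprime m k" and k: "k > 0" and m: "m > 0"
  shows "card {n. n < m * k \<and> S n \<and> \<not> k dvd n} = (k - 1) * card {n. n < m \<and> S n}"
proof -
  have "{n. n < m * k \<and> S n} = {n. n < m * k \<and> S n \<and> \<not> k dvd n} \<union> {n. n < m * k \<and> S n \<and> k dvd n}" by auto
  then have "card {n. n < m * k \<and> S n} = card {n. n < m * k \<and> S n \<and> \<not> k dvd n} + card {n. n < m * k \<and> S n \<and> k dvd n}"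
    by (metis (no_types, lifting) card_Un_disjoint disjoint_iff finite_nat_set_iff_bounded mem_Collect_eq)
  then show ?thesis using count_periodic[of S m k, OF per] count_multiples[of S m k, OF per cop k m]
    by (simp add: diff_mult_distrib)
qed



lemma sieve_count:
  fixes P :: "nat set"
  assumes "finite P" "\<forall>p\<in>P. prime p \<and> odd p"
  shows "card {n. n < 4 * (\<Prod>p\<in>P. p^2) \<and> n mod 4 = 2 \<and> (\<forall>p\<in>P. \<not> p^2 dvd n)} = (\<Prod>p\<in>P. p^2 - 1)"
  using assms
proof (induction P rule: finite_induct)
  case empty
  have "{n::nat. n < 4 \<and> n mod 4 = 2} = {2}" by auto
  then show ?case by simp
next
  case (insert q P)
  define m where "m = 4 * (\<Prod>p\<in>P. p^2)"
  define S where "S n = (n mod 4 = 2 \<and> (\<forall>p\<in>P. \<not> p^2 dvd n))" for n :: nat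
  have q: "prime q" "odd q" using insert by auto
  have dvdm: "p^2 dvd m" if "p \<in> P" for p
    unfolding m_def using dvd_prodI[OF insert(1) that, of power2] by (simp add: dvd_mult)
  have per: "S (n + m) = S n" for n
  proof -
    have "(n + m) mod 4 = n mod 4" unfolding m_def by simp
    moreover have "p^2 dvd n + m \<longleftrightarrow> p^2 dvd n" if "p \<in> P" for p
      using dvdm[OF that] by (simp add: dvd_add_left_iff)
    ultimately show ?thesis unfolding S_def by auto
  qed
  have cq: "coprime m q"
  proof -
    have "coprime 2 q" using q by simp
    then have c4: "coprime (2^2) q" by (simp only: coprime_power_left_iff) simp
    have "coprime (\<Prod>p\<in>P. p^2) q"
    proof (rule prod_coprime_left)
      fix p assume "p \<in> P"
      then have "coprime p q" using insert q by (intro primes_coprime) auto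
      then show "coprime (p^2) q" by simp
    qed
    then show ?thesis using c4 unfolding m_def by simp
  qed
  then have cop: "coprime m (q^2)" by simp
  have mpos: "m > 0" unfolding m_def using insert by (auto intro: prime_gt_0_nat)
  have qpos: "q^2 > 0" using q prime_gt_0_nat by simp
  have eqm: "4 * (\<Prod>p\<in>insert q P. p^2) = m * q^2" unfolding m_def using insert by simp
  have "{n. n < 4 * (\<Prod>p\<in>insert q P. p^2) \<and> n mod 4 = 2 \<and> (\<forall>p\<in>insert q P. \<not> p^2 dvd n)}
      = {n. n < m * q^2 \<and> S n \<and> \<not> q^2 dvd n}" unfolding eqm S_def by auto
  then have "card {n. n < 4 * (\<Prod>p\<in>insert q P. p^2) \<and> n mod 4 = 2 \<and> (\<forall>p\<in>insert q P. \<not> p^2 dvd n)}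
      = (q^2 - 1) * card {n. n < m \<and> S n}"
    using count_nonmultiples[of S m "q^2", OF per cop qpos mpos] by simp
  also have "card {n. n < m \<and> S n} = (\<Prod>p\<in>P. p^2 - 1)"
    using insert unfolding m_def S_def by auto
  finally show ?case using insert by simp
qed



lemma euler_ineq:
  fixes P :: "nat set" and M :: nat
  assumes "finite P" "\<forall>p\<in>P. prime p"
  shows "(\<Prod>p\<in>P. 1 - 1 / real p ^ 2) * (\<Sum>n\<in>{1..M}. 1 / real n ^ 2)
         \<le> (\<Sum>n\<in>{n\<in>{1..M}. \<forall>p\<in>P. \<not> p dvd n}. 1 / real n ^ 2)"
  using assms
proof (induction P rule: finite_induct)
  case empty
  have "{n\<in>{1..M}. \<forall>p\<in>{}. \<not> p dvd n} = {1..M}" by auto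
  then show ?case by simp
next
  case (insert q P)
  define D where "D = {n\<in>{1..M}. \<forall>p\<in>P. \<not> p dvd n}"
  define f where "f n = 1 / real n ^ 2" for n :: nat
  have q: "prime q" using insert by auto
  then have q1: "q > 1" using prime_gt_1_nat by blast
  have finD: "finite D" unfolding D_def by auto
  have IH: "(\<Prod>p\<in>P. 1 - 1 / real p ^ 2) * (\<Sum>n\<in>{1..M}. f n) \<le> (\<Sum>n\<in>D. f n)"
    using insert unfolding D_def f_def by auto
  have cq: "0 \<le> 1 - 1 / real q ^ 2" using q1 by (simp add: field_simps)
  have "(\<Prod>p\<in>insert q P. 1 - 1 / real p ^ 2) * (\<Sum>n\<in>{1..M}. f n)
      = (1 - 1 / real q ^ 2) * ((\<Prod>p\<in>P. 1 - 1 / real p ^ 2) * (\<Sum>n\<in>{1..M}. f n))"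
    using insert by simp
  also have "\<dots> \<le> (1 - 1 / real q ^ 2) * (\<Sum>n\<in>D. f n)"
    by (rule mult_left_mono[OF IH cq])
  also have "\<dots> = (\<Sum>n\<in>D. f n) - (\<Sum>j\<in>D. f (q * j))"
    by (simp add: f_def right_diff_distrib sum_subtractf sum_distrib_left power_mult_distrib mult.commute)
  finally have L: "(\<Prod>p\<in>insert q P. 1 - 1 / real p ^ 2) * (\<Sum>n\<in>{1..M}. f n)
      \<le> (\<Sum>n\<in>D. f n) - (\<Sum>j\<in>D. f (q * j))" .
  define Dq where "Dq = {n\<in>D. q dvd n}"
  have sub: "Dq \<subseteq> (\<lambda>j. q * j) ` D"
  proof
    fix n assume n: "n \<in> Dq"
    then obtain j where j: "n = q * j" unfolding Dq_def by auto
    have "j \<ge> 1" using n j unfolding Dq_def D_def by (cases j) auto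
    moreover have "j \<le> n" using j q1 by simp
    moreover have "\<not> p dvd j" if "p \<in> P" for p
      using n j that unfolding Dq_def D_def by auto
    ultimately have "j \<in> D" using n unfolding Dq_def D_def by auto
    then show "n \<in> (\<lambda>j. q * j) ` D" using j by auto
  qed
  have "(\<Sum>n\<in>Dq. f n) \<le> (\<Sum>n\<in>(\<lambda>j. q * j) ` D. f n)"
    by (rule sum_mono2) (use sub finD in \<open>auto simp: f_def\<close>)
  also have "\<dots> = (\<Sum>j\<in>D. f (q * j))"
    by (subst sum.reindex) (use q1 in \<open>auto simp: inj_on_def\<close>)
  finally have R1: "(\<Sum>n\<in>Dq. f n) \<le> (\<Sum>j\<in>D. f (q * j))" .
  have "D = {n\<in>D. \<not> q dvd n} \<union> Dq" "{n\<in>D. \<not> q dvd n} \<inter> Dq = {}" unfolding Dq_def by auto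
  then have "(\<Sum>n\<in>D. f n) = (\<Sum>n\<in>{n\<in>D. \<not> q dvd n}. f n) + (\<Sum>n\<in>Dq. f n)"
    using finD by (metis (no_types, lifting) finite_Un sum.union_disjoint)
  moreover have "{n\<in>D. \<not> q dvd n} = {n\<in>{1..M}. \<forall>p\<in>insert q P. \<not> p dvd n}"
    unfolding D_def by auto
  ultimately show ?case using L R1 unfolding f_def by simp
qed

lemma euler_all:
  fixes M :: nat
  shows "(\<Prod>p\<in>{p. prime p \<and> p \<le> M}. 1 - 1 / real p ^ 2) * (\<Sum>n\<in>{1..M}. 1 / real n ^ 2) \<le> 1"
proof -
  have "{n\<in>{1..M}. \<forall>p\<in>{p. prime p \<and> p \<le> M}. \<not> p dvd n} \<subseteq> {1}"
  proof
    fix n assume n: "n \<in> {n\<in>{1..M}. \<forall>p\<in>{p. prime p \<and> p \<le> M}. \<not> p dvd n}"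
    show "n \<in> {1}"
    proof (rule ccontr)
      assume "n \<notin> {1}"
      then have "n \<noteq> 1" by simp
      then obtain p where "prime p" "p dvd n" using prime_factor_nat by blast
      moreover have "p \<le> n" using \<open>p dvd n\<close> n by (auto intro: dvd_imp_le)
      ultimately show False using n by auto
    qed
  qed
  then have "(\<Sum>n\<in>{n\<in>{1..M}. \<forall>p\<in>{p. prime p \<and> p \<le> M}. \<not> p dvd n}. 1 / real n ^ 2) \<le> (\<Sum>n\<in>{1::nat}. 1 / real n ^ 2)"
    by (intro sum_mono2) auto
  moreover have "(\<Prod>p\<in>{p. prime p \<and> p \<le> M}. 1 - 1 / real p ^ 2) * (\<Sum>n\<in>{1..M}. 1 / real n ^ 2)
     \<le> (\<Sum>n\<in>{n\<in>{1..M}. \<forall>p\<in>{p. prime p \<and> p \<le> M}. \<not> p dvd n}. 1 / real n ^ 2)"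
    by (rule euler_ineq) auto
  ultimately show ?thesis by simp
qed



lemma tele:
  fixes N x :: nat
  assumes "N \<ge> 1" "x \<ge> N"
  shows "(\<Sum>m\<in>{N<..x}. 1 / real m ^ 2) \<le> 1 / real N - 1 / real x"
  using assms(2)
proof (induction x rule: nat_induct_at_least)
  case base then show ?case by simp
next
  case (Suc x)
  have x1: "real x \<ge> 1" using Suc assms by simp
  have "{N<..Suc x} = insert (Suc x) {N<..x}" using Suc by auto
  then have "(\<Sum>m\<in>{N<..Suc x}. 1 / real m ^ 2) = 1 / real (Suc x) ^ 2 + (\<Sum>m\<in>{N<..x}. 1 / real m ^ 2)"
    by simp
  also have "\<dots> \<le> 1 / real (Suc x) ^ 2 + (1 / real N - 1 / real x)" using Suc by simp
  also have "1 / real (Suc x) ^ 2 \<le> 1 / real x - 1 / real (Suc x)"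
  proof -
    have e: "1 / real x - 1 / real (Suc x) = 1 / (real x * real (Suc x))"
      using x1 by (simp add: divide_simps)
    have "real x * real (Suc x) \<le> real (Suc x) ^ 2" by (simp add: power2_eq_square)
    then have "1 / real (Suc x) ^ 2 \<le> 1 / (real x * real (Suc x))"
      using x1 by (intro frac_le) auto
    then show ?thesis using e by simp
  qed
  finally show ?case by simp
qed

lemma tail_sum:
  fixes N x :: nat
  assumes "N \<ge> 1"
  shows "(\<Sum>m\<in>{N<..x}. 1 / real m ^ 2) \<le> 1 / real N"
proof (cases "x \<ge> N")
  case True
  have "0 \<le> 1 / real x" by simp
  then show ?thesis using tele[OF assms True] by linarith
next
  case False then show ?thesis by simp
qed

lemma card_multiples_le:
  fixes d x :: nat
  assumes "d > 0"
  shows "real (card {n\<in>{1..x}. d dvd n}) \<le> real x / real d"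
proof -
  have "{n\<in>{1..x}. d dvd n} \<subseteq> (\<lambda>j. d * j) ` {1..x div d}"
  proof
    fix n assume n: "n \<in> {n\<in>{1..x}. d dvd n}"
    then obtain j where j: "n = d * j" by auto
    have "j \<ge> 1" using n j by (cases j) auto
    moreover have "j \<le> x div d"
    proof -
      have "j = (d * j) div d" using assms by simp
      also have "\<dots> \<le> x div d" using n j by (intro div_le_mono) auto
      finally show ?thesis .
    qed
    ultimately show "n \<in> (\<lambda>j. d * j) ` {1..x div d}" using j by auto
  qed
  then have "card {n\<in>{1..x}. d dvd n} \<le> card ((\<lambda>j. d * j) ` {1..x div d})"
    by (intro card_mono) auto
  also have "\<dots> \<le> x div d" using card_image_le[of "{1..x div d}" "\<lambda>j. d * j"] by simp
  finally have "real (card {n\<in>{1..x}. d dvd n}) \<le> real (x div d)" by simp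
  also have "\<dots> \<le> real x / real d" by (rule of_nat_div_le_of_nat)
  finally show ?thesis .
qed

lemma tail_count:
  fixes N x :: nat
  assumes N: "N \<ge> 1"
  shows "real (card {n\<in>{1..x}. \<exists>m. N < m \<and> m^2 dvd n}) \<le> real x / real N"
proof -
  have sub: "{n\<in>{1..x}. \<exists>m. N < m \<and> m^2 dvd n} \<subseteq> (\<Union>m\<in>{N<..x}. {n\<in>{1..x}. m^2 dvd n})"
  proof
    fix n assume n: "n \<in> {n\<in>{1..x}. \<exists>m. N < m \<and> m^2 dvd n}"
    then obtain m where m: "N < m" "m^2 dvd n" by auto
    have "m \<le> m^2" by (simp add: power2_eq_square)
    also have "m^2 \<le> n" using m n by (intro dvd_imp_le) auto
    finally have "m \<le> x" using n by auto
    then show "n \<in> (\<Union>m\<in>{N<..x}. {n\<in>{1..x}. m^2 dvd n})" using m n by auto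
  qed
  have "card {n\<in>{1..x}. \<exists>m. N < m \<and> m^2 dvd n} \<le> card (\<Union>m\<in>{N<..x}. {n\<in>{1..x}. m^2 dvd n})"
    by (rule card_mono[OF _ sub]) auto
  also have "\<dots> \<le> (\<Sum>m\<in>{N<..x}. card {n\<in>{1..x}. m^2 dvd n})"
    by (rule card_UN_le) auto
  finally have "real (card {n\<in>{1..x}. \<exists>m. N < m \<and> m^2 dvd n}) \<le> real (\<Sum>m\<in>{N<..x}. card {n\<in>{1..x}. m^2 dvd n})"
    by (simp only: of_nat_le_iff)
  also have "\<dots> = (\<Sum>m\<in>{N<..x}. real (card {n\<in>{1..x}. m^2 dvd n}))"
    by (rule of_nat_sum)
  also have "\<dots> \<le> (\<Sum>m\<in>{N<..x}. real x * (1 / real m ^ 2))"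
  proof (rule sum_mono)
    fix m assume "m \<in> {N<..x}"
    then have "m^2 > 0" by simp
    then show "real (card {n\<in>{1..x}. m^2 dvd n}) \<le> real x * (1 / real m ^ 2)"
      using card_multiples_le[of "m^2" x] by simp
  qed
  also have "\<dots> = real x * (\<Sum>m\<in>{N<..x}. 1 / real m ^ 2)" by (simp add: sum_distrib_left)
  also have "\<dots> \<le> real x * (1 / real N)" by (intro mult_left_mono tail_sum N) auto
  finally show ?thesis by simp
qed



lemma L0: fixes n :: nat assumes n: "n > 900" "4 dvd n"
  shows "\<exists>a b. n = a + b \<and> a mod 4 = 2 \<and> 9 dvd a \<and> b mod 4 = 2 \<and> 25 dvd b \<and> a > 0 \<and> b > 0"
proof -
  define t0 where "t0 = (2 * n) mod 9"
  define t where "t = (if odd t0 then t0 else t0 + 9)"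
  have t0: "t0 < 9" unfolding t0_def by simp
  have t: "odd t" "t \<le> 17" "t mod 9 = (2 * n) mod 9" unfolding t_def t0_def by auto
  obtain u where u: "t = 2 * u + 1" using t(1) oddE by blast
  have e: "50 * t = 2 + 4 * (25 * u + 12)" using u by simp
  have b4: "(50 * t) mod 4 = 2" unfolding e mod_mult_self2 by simp
  have le: "50 * t < n" using t(2) n(1) by linarith
  have "(50 * t) mod 9 = (50 * (t mod 9)) mod 9" by (simp add: mod_mult_right_eq)
  also have "\<dots> = (50 * ((2 * n) mod 9)) mod 9" using t(3) by simp
  also have "\<dots> = (100 * n) mod 9" by (simp add: mod_mult_right_eq)
  also have "\<dots> = (n + 9 * (11 * n)) mod 9"
  proof -
    have "100 * n = n + 9 * (11 * n)" by simp
    then show ?thesis by (simp only:)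
  qed
  also have "\<dots> = n mod 9" by (simp only: mod_mult_self2)
  finally have "n mod 9 = (50 * t) mod 9" by simp
  then have a9: "9 dvd (n - 50 * t)" using le by (simp add: mod_eq_dvd_iff_nat)
  obtain j where j: "n = 4 * j" using n(2) by auto
  obtain i where i: "50 * t = 4 * i + 2" using b4 by (metis mod_mult_div_eq add.commute)
  have e2: "n - 50 * t = 2 + 4 * (j - i - 1)" using j i le by simp
  have a4: "(n - 50 * t) mod 4 = 2" unfolding e2 mod_mult_self2 by simp
  show ?thesis
    by (rule exI[of _ "n - 50 * t"], rule exI[of _ "50 * t"]) (use le a9 a4 b4 t(1) in \<open>auto\<close>)
qed


lemma pick:
  fixes Q r :: nat assumes "odd Q" "r < 4"
  shows "\<exists>k. 1 \<le> k \<and> k \<le> 4 \<and> (Q * k) mod 4 = r"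
proof -
  have q: "Q mod 4 = 1 \<or> Q mod 4 = 3" using assms(1) by presburger
  have r: "r = 0 \<or> r = 1 \<or> r = 2 \<or> r = 3" using assms(2) by auto
  have m: "(Q * k) mod 4 = ((Q mod 4) * k) mod 4" for k by (simp add: mod_mult_left_eq)
  have "\<exists>k\<in>{1,2,3,4::nat}. ((Q mod 4) * k) mod 4 = r" using q r by auto
  then obtain k where k: "k \<in> {1,2,3,4::nat}" "((Q mod 4) * k) mod 4 = r" by blast
  show ?thesis by (rule exI[of _ k]) (use k m in auto)
qed

lemma L3: fixes n Q :: nat assumes "odd Q" "n \<ge> 4 * Q"
  shows "\<exists>k. 1 \<le> k \<and> k \<le> 4 \<and> 4 dvd (n - Q * k)"
proof -
  obtain k where k: "1 \<le> k" "k \<le> 4" "(Q * k) mod 4 = n mod 4" using pick[OF assms(1), of "n mod 4"] by auto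
  have "Q * k \<le> n" using k(2) assms(2) by (metis mult_le_mono2 mult.commute order_trans)
  then have "4 dvd (n - Q * k)" using k(3)[symmetric] by (simp add: mod_eq_dvd_iff_nat)
  then show ?thesis using k by auto
qed

lemma L4: fixes n Q :: nat assumes "odd Q" "n \<ge> 4 * Q"
  shows "\<exists>k. 1 \<le> k \<and> k \<le> 4 \<and> (n - Q * k) mod 4 = 2"
proof -
  obtain k where k: "1 \<le> k" "k \<le> 4" "(Q * k) mod 4 = (n + 2) mod 4" using pick[OF assms(1), of "(n + 2) mod 4"] by auto
  have le: "Q * k \<le> n" using k(2) assms(2) by (metis mult_le_mono2 mult.commute order_trans)
  then have le2: "Q * k \<le> n + 2" by simp
  have "4 dvd (n + 2 - Q * k)" using mod_eq_dvd_iff_nat[OF le2, of 4] k(3)[symmetric] by simp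
  then obtain j where j: "n + 2 - Q * k = 4 * j" by auto
  have "j \<ge> 1" using j le by (cases j) auto
  then have e: "n - Q * k = 2 + 4 * (j - 1)" using j le by simp
  have "(n - Q * k) mod 4 = 2" unfolding e mod_mult_self2 by simp
  then show ?thesis using k by blast
qed


definition PP :: "nat \<Rightarrow> nat set" where "PP N = {p. prime p \<and> odd p \<and> p \<le> N}"
definition QQ :: "nat \<Rightarrow> nat" where "QQ N = (\<Prod>p\<in>PP N. p^2)"
definition AA :: "nat \<Rightarrow> nat set" where
  "AA N = {n. 0 < n \<and> ((n mod 4 = 2 \<and> (\<exists>p\<in>PP N. p^2 dvd n)) \<or> QQ N dvd n)}"

lemma PP_fin: "finite (PP N)" unfolding PP_def by auto

lemma PP_35: "N \<ge> 5 \<Longrightarrow> 3 \<in> PP N \<and> 5 \<in> PP N" unfolding PP_def by auto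

lemma QQ_dvd: "p \<in> PP N \<Longrightarrow> p^2 dvd QQ N"
  unfolding QQ_def by (rule dvd_prodI[OF PP_fin])

lemma QQ_odd: "odd (QQ N)"
proof
  assume "(2::nat) dvd QQ N"
  moreover have "prime (2::nat)" by simp
  ultimately obtain p where p: "p \<in> PP N" "(2::nat) dvd p^2"
    unfolding QQ_def using prime_dvd_prod_iff[where p = "2::nat" and f = "\<lambda>p. p^2" and A = "PP N", OF PP_fin] by auto
  then have "2 dvd p" using prime_dvd_power[of 2 p 2] by auto
  then show False using p unfolding PP_def by auto
qed

lemma QQ_pos: "QQ N > 0" using QQ_odd[of N] odd_pos by blast

lemma AA_Q: "k \<ge> 1 \<Longrightarrow> QQ N * k \<in> AA N"
  unfolding AA_def using QQ_pos[of N] by auto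

lemma AA_sum_nsf:
  assumes N: "N \<ge> 5" and x: "x \<in> sumset2 (AA N)"
  shows "\<not> squarefree x"
proof -
  obtain a b where ab: "x = a + b" "a \<in> AA N" "b \<in> AA N" using x unfolding sumset2_def by auto
  have nu: "\<not> p dvd 1" if "p \<in> PP N" for p
    using that unfolding PP_def by auto
  have "9 dvd QQ N" using QQ_dvd[of 3 N] PP_35[OF N] by simp
  show ?thesis
  proof (cases "QQ N dvd a")
    case Qa: True
    show ?thesis
    proof (cases "QQ N dvd b")
      case True
      then have "3^2 dvd x" using Qa \<open>9 dvd QQ N\<close> ab(1) by (simp add: dvd_trans)
      then show ?thesis by (rule not_squarefreeI) simp
    next
      case False
      then obtain p where p: "p \<in> PP N" "p^2 dvd b" using ab(3) unfolding AA_def by auto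
      have "p^2 dvd a" using QQ_dvd[OF p(1)] Qa by (rule dvd_trans)
      then have "p^2 dvd x" using p ab(1) by simp
      then show ?thesis using nu[OF p(1)] by (rule not_squarefreeI)
    qed
  next
    case Qa: False
    then obtain p where p: "p \<in> PP N" "p^2 dvd a" and a4: "a mod 4 = 2" using ab(2) unfolding AA_def by auto
    show ?thesis
    proof (cases "QQ N dvd b")
      case True
      have "p^2 dvd b" using QQ_dvd[OF p(1)] True by (rule dvd_trans)
      then have "p^2 dvd x" using p ab(1) by simp
      then show ?thesis using nu[OF p(1)] by (rule not_squarefreeI)
    next
      case False
      then have b4: "b mod 4 = 2" using ab(3) unfolding AA_def by auto
      have "(a + b) mod 4 = (a mod 4 + b mod 4) mod 4" by (simp add: mod_add_eq)
      then have "2^2 dvd x" using a4 b4 ab(1) by (simp add: mod_eq_0_iff_dvd[symmetric])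
      then show ?thesis by (rule not_squarefreeI) simp
    qed
  qed
qed

lemma AA_4:
  assumes N: "N \<ge> 5" and n: "n > 900" "4 dvd n"
  shows "n \<in> sumset2 (AA N)"
proof -
  obtain a b where ab: "n = a + b" "a mod 4 = 2" "9 dvd a" "b mod 4 = 2" "25 dvd b" "a > 0" "b > 0"
    using L0[OF n] by blast
  have "a \<in> AA N" using ab PP_35[OF N] unfolding AA_def by (auto intro!: bexI[of _ 3])
  moreover have "b \<in> AA N" using ab PP_35[OF N] unfolding AA_def by (auto intro!: bexI[of _ 5])
  ultimately show ?thesis using ab(1) unfolding sumset2_def by auto
qed

lemma AA_3:
  assumes N: "N \<ge> 5" and n: "n > 4 * QQ N + 900"
  shows "n \<in> sumset3 (AA N)"
proof -
  obtain k where k: "1 \<le> k" "k \<le> 4" "4 dvd (n - QQ N * k)"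
    using L3[OF QQ_odd[of N], of n] n by auto
  have le: "QQ N * k \<le> 4 * QQ N" using k(2) by simp
  have "n - QQ N * k > 900" using n le by linarith
  then have "n - QQ N * k \<in> sumset2 (AA N)" using AA_4[OF N] k(3) by blast
  then obtain a b where ab: "n - QQ N * k = a + b" "a \<in> AA N" "b \<in> AA N" unfolding sumset2_def by auto
  have "n = a + b + QQ N * k" using ab(1) le n by linarith
  then show ?thesis using ab AA_Q[OF k(1), of N] unfolding sumset3_def by blast
qed

lemma AA_exc:
  assumes N: "N \<ge> 5" and n: "n > 4 * QQ N + 900" and nsf: "\<not> squarefree n" and nA: "n \<notin> sumset2 (AA N)"
  shows "\<exists>m. N < m \<and> m^2 dvd n"
proof -
  have "n \<noteq> 0" using n by simp
  then obtain p where p: "prime p" "p^2 dvd n" using nsf squarefree_factorial_semiring by blast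
  show ?thesis
  proof (cases "p > N")
    case True then show ?thesis using p by blast
  next
    case False
    show ?thesis
    proof (cases "p = 2")
      case True
      then have "4 dvd n" using p by simp
      then have "n \<in> sumset2 (AA N)" using AA_4[OF N] n by simp
      then show ?thesis using nA by simp
    next
      case p2: False
      have "p \<ge> 2" using p prime_ge_2_nat by blast
      then have "odd p" using p p2 prime_odd_nat by simp
      then have pP: "p \<in> PP N" using p False unfolding PP_def by simp
      obtain k where k: "1 \<le> k" "k \<le> 4" "(n - QQ N * k) mod 4 = 2"
        using L4[OF QQ_odd[of N], of n] n by auto
      have le: "QQ N * k \<le> 4 * QQ N" using k(2) by simp
      have "p^2 dvd QQ N * k" using QQ_dvd[OF pP] by simp
      then have "p^2 dvd n - QQ N * k" using p(2) by (rule dvd_diff_nat[rotated])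
      moreover have "n - QQ N * k > 0" using n le by linarith
      ultimately have "n - QQ N * k \<in> AA N" using k(3) pP unfolding AA_def by auto
      moreover have "n = (n - QQ N * k) + QQ N * k" using le n by linarith
      ultimately have "n \<in> sumset2 (AA N)" using AA_Q[OF k(1), of N] unfolding sumset2_def by blast
      then show ?thesis using nA by simp
    qed
  qed
qed



lemma prime_ne2_odd: "prime (p::nat) \<Longrightarrow> p \<noteq> 2 \<Longrightarrow> odd p"
  using prime_ge_2_nat[of p] prime_odd_nat[of p] by linarith

lemma AA_periodic:
  assumes "n \<ge> 1"
  shows "n + 4 * QQ N \<in> AA N \<longleftrightarrow> n \<in> AA N"
proof -
  have m4: "(n + 4 * QQ N) mod 4 = n mod 4" by simp
  have pd: "p^2 dvd n + 4 * QQ N \<longleftrightarrow> p^2 dvd n" if "p \<in> PP N" for p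
    using dvd_mult[OF QQ_dvd[OF that], of 4] by (simp add: dvd_add_left_iff)
  have qd: "QQ N dvd n + 4 * QQ N \<longleftrightarrow> QQ N dvd n" by (simp add: dvd_add_left_iff)
  show ?thesis unfolding AA_def using m4 pd qd assms by auto
qed

lemma AA_density:
  assumes N: "N \<ge> 5"
  shows "\<exists>d. has_density (AA N) d \<and> d \<ge> 1/4 - 1 / (3 * (\<Sum>n\<in>{1..N}. 1 / real n ^ 2))"
proof -
  define T where "T = 4 * QQ N"
  define S where "S = (\<Sum>n\<in>{1..N}. 1 / real n ^ 2)"
  define R where "R = (\<Prod>p\<in>PP N. p^2 - 1)"
  have Tpos: "T > 0" unfolding T_def using QQ_pos by simp
  have dens: "has_density (AA N) (real (card (AA N \<inter> {1..T})) / real T)"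
    by (rule periodic_density[OF Tpos]) (use AA_periodic in \<open>auto simp: T_def\<close>)
  define B0 where "B0 = {n. n < T \<and> n mod 4 = 2 \<and> (\<exists>p\<in>PP N. p^2 dvd n)}"
  define E0 where "E0 = {n. n < T \<and> n mod 4 = 2 \<and> (\<forall>p\<in>PP N. \<not> p^2 dvd n)}"
  define U where "U = {n. n < T \<and> n mod 4 = 2}"
  have "B0 \<subseteq> AA N \<inter> {1..T}" unfolding B0_def AA_def by auto
  then have c1: "card B0 \<le> card (AA N \<inter> {1..T})" by (intro card_mono) auto
  have "card {n. n < 4 * QQ N \<and> n mod 4 = (2::nat)} = QQ N * card {n. n < 4 \<and> n mod 4 = (2::nat)}"
    by (rule count_periodic) simp
  moreover have "{n. n < 4 \<and> n mod 4 = (2::nat)} = {2}" by auto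
  ultimately have cU: "card U = QQ N" unfolding U_def T_def by simp
  have cE: "card E0 = R" unfolding E0_def R_def T_def QQ_def
    by (rule sieve_count[OF PP_fin]) (auto simp: PP_def)
  have "U = B0 \<union> E0" "B0 \<inter> E0 = {}" unfolding U_def B0_def E0_def by auto
  then have "card U = card B0 + card E0" by (simp add: card_Un_disjoint B0_def E0_def)
  then have cB: "real (card B0) = real (QQ N) - real R" using cU cE by simp
  have Qpos: "real (QQ N) > 0" using QQ_pos by simp
  define Pi where "Pi = (\<Prod>p\<in>PP N. 1 - 1 / real p ^ 2)"
  have pp: "p > 0" if "p \<in> PP N" for p using that unfolding PP_def by (auto intro: prime_gt_0_nat)
  have "real R / real (QQ N) = (\<Prod>p\<in>PP N. real (p^2 - 1)) / (\<Prod>p\<in>PP N. real (p^2))"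
    unfolding R_def QQ_def by simp
  also have "\<dots> = (\<Prod>p\<in>PP N. real (p^2 - 1) / real (p^2))" by (rule prod_dividef[symmetric])
  also have "\<dots> = Pi" unfolding Pi_def
  proof (rule prod.cong)
    fix p assume "p \<in> PP N"
    then have "p > 0" by (rule pp)
    then have "p^2 \<ge> 1" by simp
    then have "real (p^2 - 1) = real p ^ 2 - 1" by (simp add: of_nat_diff)
    then show "real (p^2 - 1) / real (p^2) = 1 - 1 / real p ^ 2" using \<open>p > 0\<close> by (simp add: field_simps)
  qed simp
  finally have RQ: "real R / real (QQ N) = Pi" .
  have d1: "real (card (AA N \<inter> {1..T})) / real T \<ge> 1/4 - Pi / 4"
  proof -
    have "1/4 - Pi / 4 = (real (QQ N) - real R) / real T"
      using RQ Qpos unfolding T_def by (simp add: field_simps)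
    also have "\<dots> = real (card B0) / real T" using cB by simp
    also have "\<dots> \<le> real (card (AA N \<inter> {1..T})) / real T"
      using c1 Tpos by (intro divide_right_mono) auto
    finally show ?thesis .
  qed
  have all: "{p. prime p \<and> p \<le> N} = insert 2 (PP N)" unfolding PP_def using N
    by (auto dest: prime_ne2_odd)
  have "2 \<notin> PP N" unfolding PP_def by simp
  then have h: "(\<Prod>p\<in>{p. prime p \<and> p \<le> N}. 1 - 1 / real p ^ 2) = (3/4) * Pi"
    unfolding all Pi_def using PP_fin by simp
  have "(\<Prod>p\<in>{p. prime p \<and> p \<le> N}. 1 - 1 / real p ^ 2) * S \<le> 1"
    using euler_all[of N] unfolding S_def .
  then have e: "(3/4) * Pi * S \<le> 1" unfolding h .
  have "S \<ge> 1"
  proof -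
    have "(\<Sum>n\<in>{1::nat}. 1 / real n ^ 2) \<le> S" unfolding S_def using N by (intro sum_mono2) auto
    then show ?thesis by simp
  qed
  then have "Pi \<le> (4/3) / S" using e by (simp add: field_simps)
  then have "1/4 - Pi / 4 \<ge> 1/4 - 1 / (3 * S)" using \<open>S \<ge> 1\<close> by (simp add: field_simps)
  then show ?thesis using dens d1 unfolding S_def by (intro exI[of _ "real (card (AA N \<inter> {1..T})) / real T"]) auto
qed



lemma AA_upper:
  assumes N: "N \<ge> 5" and e: "\<epsilon> > 0" and Ne: "real N \<ge> 2 / \<epsilon>"
  shows "upper_density {n. n > 0 \<and> \<not> squarefree n \<and> n \<notin> sumset2 (AA N)} \<le> ereal \<epsilon>"
proof -
  define E where "E = {n. n > 0 \<and> \<not> squarefree n \<and> n \<notin> sumset2 (AA N)}"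
  define C where "C = 4 * QQ N + 900"
  have N1: "N \<ge> 1" using N by simp
  have invN: "1 / real N \<le> \<epsilon> / 2"
  proof -
    have "real N > 0" using N by simp
    then show ?thesis using Ne e by (simp add: field_simps)
  qed
  have bound: "count_ratio E x \<le> \<epsilon>" if x: "x \<ge> nat \<lceil>2 * real C / \<epsilon>\<rceil> + 1" for x
  proof -
    have xpos: "real x > 0" using x by simp
    have xC: "real x \<ge> 2 * real C / \<epsilon>" using x by linarith
    have sub: "E \<inter> {1..x} \<subseteq> {1..C} \<union> {n\<in>{1..x}. \<exists>m. N < m \<and> m^2 dvd n}"
    proof
      fix n assume n: "n \<in> E \<inter> {1..x}"
      show "n \<in> {1..C} \<union> {n\<in>{1..x}. \<exists>m. N < m \<and> m^2 dvd n}"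
      proof (cases "n \<le> C")
        case True then show ?thesis using n by auto
      next
        case False
        then have "n > 4 * QQ N + 900" unfolding C_def by simp
        then have "\<exists>m. N < m \<and> m^2 dvd n" using AA_exc[OF N] n unfolding E_def by blast
        then show ?thesis using n by auto
      qed
    qed
    have "card (E \<inter> {1..x}) \<le> card ({1..C} \<union> {n\<in>{1..x}. \<exists>m. N < m \<and> m^2 dvd n})"
      by (rule card_mono[OF _ sub]) auto
    also have "\<dots> \<le> card {1..C} + card {n\<in>{1..x}. \<exists>m. N < m \<and> m^2 dvd n}"
      by (rule card_Un_le)
    finally have "real (card (E \<inter> {1..x})) \<le> real C + real (card {n\<in>{1..x}. \<exists>m. N < m \<and> m^2 dvd n})"
      by simp
    also have "\<dots> \<le> real C + real x / real N" using tail_count[OF N1, of x] by simp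
    finally have cb: "real (card (E \<inter> {1..x})) \<le> real C + real x / real N" .
    have "count_ratio E x \<le> (real C + real x / real N) / real x"
      unfolding count_ratio_def using cb xpos by (intro divide_right_mono) auto
    also have "\<dots> = real C / real x + 1 / real N" using xpos by (simp add: field_simps)
    also have "real C / real x \<le> \<epsilon> / 2"
      using xC xpos e by (simp add: field_simps)
    finally show ?thesis using invN by simp
  qed
  have "eventually (\<lambda>x. ereal (count_ratio E x) \<le> ereal \<epsilon>) sequentially"
    using eventually_ge_at_top[of "nat \<lceil>2 * real C / \<epsilon>\<rceil> + 1"]
    by eventually_elim (use bound in simp)
  then have "Limsup sequentially (\<lambda>x. ereal (count_ratio E x)) \<le> ereal \<epsilon>"
    by (rule Limsup_bounded)
  then show ?thesis unfolding upper_density_def E_def .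
qed

theorem theorem1:
  fixes \<epsilon> :: real
  assumes "\<epsilon> > 0"
  shows "\<exists>A :: nat set. 0 \<notin> A \<and>
    (\<exists>d. has_density A d \<and> d > 1/4 - 2 / pi\<^sup>2 - \<epsilon>) \<and>
    (\<forall>x \<in> sumset2 A. \<not> squarefree x) \<and>
    finite {n. n > 0 \<and> n \<notin> sumset3 A} \<and>
    upper_density {n. n > 0 \<and> \<not> squarefree n \<and> n \<notin> sumset2 A} \<le> ereal \<epsilon>"
proof -
  define S where "S N = (\<Sum>n\<in>{1..N}. 1 / real n ^ 2)" for N :: nat
  have Seq: "S N = (\<Sum>i<N. 1 / real ((i + 1)^2))" for N
    unfolding S_def using sum.atLeast1_atMost_eq[of "\<lambda>n. 1 / real n ^ 2" N] by simp
  have S_lim: "S \<longlonglongrightarrow> pi^2 / 6"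
    using inverse_squares_sums unfolding sums_def Seq[abs_def] .
  have lim2: "(\<lambda>N. 1 / (3 * S N)) \<longlonglongrightarrow> 1 / (3 * (pi^2 / 6))"
    by (intro tendsto_intros S_lim) simp
  have "1 / (3 * (pi^2 / 6)) = 2 / pi^2" by simp
  with lim2 have lim3: "(\<lambda>N. 1 / (3 * S N)) \<longlonglongrightarrow> 2 / pi^2" by simp
  have ev1: "eventually (\<lambda>N. 1 / (3 * S N) < 2 / pi^2 + \<epsilon>) sequentially"
    using order_tendstoD(2)[OF lim3] assms by simp
  have ev2: "eventually (\<lambda>N. N \<ge> 5 \<and> N \<ge> nat \<lceil>2 / \<epsilon>\<rceil>) sequentially"
    using eventually_ge_at_top[of "max 5 (nat \<lceil>2 / \<epsilon>\<rceil>)"] by eventually_elim auto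
  from eventually_conj[OF ev1 ev2] obtain N0 where N0: "\<And>N. N \<ge> N0 \<Longrightarrow> 1 / (3 * S N) < 2 / pi^2 + \<epsilon> \<and> N \<ge> 5 \<and> N \<ge> nat \<lceil>2 / \<epsilon>\<rceil>"
    unfolding eventually_sequentially by blast
  define N where "N = N0"
  have N5: "N \<ge> 5" and NS: "1 / (3 * S N) < 2 / pi^2 + \<epsilon>" and Nc: "N \<ge> nat \<lceil>2 / \<epsilon>\<rceil>"
    using N0[of N] unfolding N_def by auto
  have Ne: "real N \<ge> 2 / \<epsilon>" using Nc by linarith
  show ?thesis
  proof (intro exI[of _ "AA N"] conjI)
    show "0 \<notin> AA N" unfolding AA_def by simp
    obtain d where d: "has_density (AA N) d" "d \<ge> 1/4 - 1 / (3 * S N)"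
      using AA_density[OF N5] unfolding S_def by blast
    then show "\<exists>d. has_density (AA N) d \<and> d > 1/4 - 2 / pi\<^sup>2 - \<epsilon>"
      using NS by (intro exI[of _ d]) auto
    show "\<forall>x \<in> sumset2 (AA N). \<not> squarefree x" using AA_sum_nsf[OF N5] by blast
    have "{n. n > 0 \<and> n \<notin> sumset3 (AA N)} \<subseteq> {..4 * QQ N + 900}"
    proof
      fix n assume "n \<in> {n. n > 0 \<and> n \<notin> sumset3 (AA N)}"
      then have "\<not> (4 * QQ N + 900 < n)" using AA_3[OF N5, of n] by blast
      then show "n \<in> {..4 * QQ N + 900}" by simp
    qed
    then show "finite {n. n > 0 \<and> n \<notin> sumset3 (AA N)}" by (rule finite_subset) simp
    show "upper_density {n. n > 0 \<and> \<not> squarefree n \<and> n \<notin> sumset2 (AA N)} \<le> ereal \<epsilon>"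
      by (rule AA_upper[OF N5 assms Ne])
  qed
qed


end
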